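(* Let $n\ge2$ and consider $n$ qubits, $\mathcal H=(\mathbb C^2)^{\otimes n}$, in the drift-less setting with neighborhoods $\mathcal N_1,\dots,\mathcal N_M$ each satisfying $|\mathcal N_k|<n/2$ (i.e. no neighborhood contains $n/2$ qubits if $n$ is even, or $(n+1)/2$ qubits if $n$ is odd). Then the GHZ state $\rho_{\mathrm{GHZ}}=|\Psi_{\mathrm{GHZ}}\rangle\langle\Psi_{\mathrm{GHZ}}|$, $|\Psi_{\mathrm{GHZ}}\rangle=(|0\rangle^{\otimes n}+|1\rangle^{\otimes n})/\sqrt2$, is not QLS.
   Context: Neighborhoods are subsets of $\{1,\dots,n\}$. QL operator: $X_{\mathcal N_k}\otimes I_{\bar{\mathcal N}_k}$; QL Hamiltonian: sum of Hermitian QL operators. $\mathcal L(H,\{D_k\})(\rho)=-i[H,\rho]+\sum_k(D_k\rho D_k^\dagger-\frac12\{D_k^\dagger D_k,\rho\})$. A pure state $\rho_d=|\Psi\rangle\langle\Psi|$ is QLS if there exist a QL Hamiltonian $H_c$ and finitely many QL operators $D_k$ with $D_k|\Psi\rangle=0$ and $H_c|\Psi\rangle\in\mathbb R|\Psi\rangle$ such that $e^{\mathcal L(H_c,\{D_k\})t}(\rho_0)\to\rho_d$ for every density operator $\rho_0$. *)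

theory Defs
  imports "HOL-Analysis.Analysis"
begin

text \<open>Qubits are indexed by a finite type 'q (n = CARD('q)). The computational basis of
  (C^2)^{\<otimes> n} is indexed by 'q set: the basis vector indexed by S has qubit q in state |1>
  iff q \<in> S.\<close>

type_synonym 'q qvec = "complex ^ ('q set)"
type_synonym 'q qop = "complex ^ ('q set) ^ ('q set)"

definition smul :: "complex \<Rightarrow> 'q::finite qop \<Rightarrow> 'q qop" where
  "smul c A = (\<chi> i j. c * A $ i $ j)"

definition adj :: "'q::finite qop \<Rightarrow> 'q qop" where
  "adj A = (\<chi> i j. cnj (A $ j $ i))"

definition hermitian :: "'q::finite qop \<Rightarrow> bool" where
  "hermitian A \<longleftrightarrow> adj A = A"

definition inner_c :: "'q::finite qvec \<Rightarrow> 'q qvec \<Rightarrow> complex" where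
  "inner_c v w = (\<Sum>i\<in>UNIV. cnj (v $ i) * w $ i)"

definition psd :: "'q::finite qop \<Rightarrow> bool" where
  "psd A \<longleftrightarrow> (\<forall>v. Im (inner_c v (A *v v)) = 0 \<and> Re (inner_c v (A *v v)) \<ge> 0)"

definition trace_c :: "'q::finite qop \<Rightarrow> complex" where
  "trace_c A = (\<Sum>i\<in>UNIV. A $ i $ i)"

definition density_op :: "'q::finite qop \<Rightarrow> bool" where
  "density_op \<rho> \<longleftrightarrow> hermitian \<rho> \<and> psd \<rho> \<and> trace_c \<rho> = 1"

definition outer :: "'q::finite qvec \<Rightarrow> 'q qvec \<Rightarrow> 'q qop" where
  "outer v w = (\<chi> i j. v $ i * cnj (w $ j))"

text \<open>A is quasi-local on neighborhood N: A = X_N \<otimes> I on the complement of N.\<close>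
definition QL_on :: "'q::finite set \<Rightarrow> 'q qop \<Rightarrow> bool" where
  "QL_on N A \<longleftrightarrow> (\<exists>X :: 'q set \<Rightarrow> 'q set \<Rightarrow> complex.
      \<forall>S T. A $ S $ T = (if S - N = T - N then X (S \<inter> N) (T \<inter> N) else 0))"

definition QL_op :: "'q::finite set set \<Rightarrow> 'q qop \<Rightarrow> bool" where
  "QL_op Ns A \<longleftrightarrow> (\<exists>N\<in>Ns. QL_on N A)"

definition QL_hamiltonian :: "'q::finite set set \<Rightarrow> 'q qop \<Rightarrow> bool" where
  "QL_hamiltonian Ns H \<longleftrightarrow>
     (\<exists>Hs. (\<forall>h\<in>set Hs. hermitian h \<and> QL_op Ns h) \<and> H = sum_list Hs)"

definition lindblad :: "'q::finite qop \<Rightarrow> 'q qop list \<Rightarrow> 'q qop \<Rightarrow> 'q qop" where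
  "lindblad H Ds \<rho> =
     smul (-\<i>) (H ** \<rho> - \<rho> ** H)
     + sum_list (map (\<lambda>D. D ** \<rho> ** adj D
          - smul (1/2) (adj D ** D ** \<rho> + \<rho> ** (adj D ** D))) Ds)"

definition semigroup :: "('q::finite qop \<Rightarrow> 'q qop) \<Rightarrow> real \<Rightarrow> 'q qop \<Rightarrow> 'q qop" where
  "semigroup L t \<rho> = (\<Sum>k. (t ^ k / fact k) *\<^sub>R (L ^^ k) \<rho>)"

definition QLS :: "'q::finite set set \<Rightarrow> 'q qvec \<Rightarrow> bool" where
  "QLS Ns \<psi> \<longleftrightarrow>
     (\<exists>Hc Ds. QL_hamiltonian Ns Hc \<and> (\<forall>D\<in>set Ds. QL_op Ns D)
        \<and> (\<forall>D\<in>set Ds. D *v \<psi> = 0)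
        \<and> (\<exists>r::real. Hc *v \<psi> = (\<chi> i. complex_of_real r * \<psi> $ i))
        \<and> (\<forall>\<rho>0. density_op \<rho>0 \<longrightarrow>
              ((\<lambda>t. semigroup (lindblad Hc Ds) t \<rho>0) \<longlongrightarrow> outer \<psi> \<psi>) at_top))"

definition GHZ :: "'q::finite qvec" where
  "GHZ = (\<chi> S. if S = {} \<or> S = UNIV then complex_of_real (1 / sqrt 2) else 0)"

end

theory Submission
  imports Defs
begin

lemma ql_zero_empty:
  fixes N S :: "'q::finite set" and A :: "'q qop"
  assumes "QL_on N A" "2 * card N < CARD('q)" "\<not> 2 * card S < CARD('q)"
  shows "A $ S $ {} = 0"
proof -
  obtain X where X: "\<forall>S T. A $ S $ T = (if S - N = T - N then X (S \<inter> N) (T \<inter> N) else 0)"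
    using assms(1) unfolding QL_on_def by blast
  show ?thesis
  proof (cases "S - N = {} - N")
    case True
    then have "S \<subseteq> N" by auto
    then have "card S \<le> card N" by (simp add: card_mono)
    then show ?thesis using assms by linarith
  next
    case False then show ?thesis using X by simp
  qed
qed

lemma ql_zero_univ:
  fixes N S :: "'q::finite set" and A :: "'q qop"
  assumes "QL_on N A" "2 * card N < CARD('q)" "2 * card S < CARD('q)"
  shows "A $ S $ UNIV = 0"
proof -
  obtain X where X: "\<forall>S T. A $ S $ T = (if S - N = T - N then X (S \<inter> N) (T \<inter> N) else 0)"
    using assms(1) unfolding QL_on_def by blast
  show ?thesis
  proof (cases "S - N = UNIV - N")
    case True
    then have "UNIV - N \<subseteq> S" by auto
    then have "card (UNIV - N) \<le> card S" by (simp add: card_mono)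
    moreover have "card (UNIV - N) = CARD('q) - card N" by (simp add: card_Diff_subset)
    ultimately show ?thesis using assms by linarith
  next
    case False then show ?thesis using X by simp
  qed
qed

lemma ghz_mult:
  fixes M :: "'q::finite qop"
  shows "(M *v GHZ) $ S = complex_of_real (1 / sqrt 2) * (M $ S $ {} + M $ S $ UNIV)"
proof -
  let ?c = "complex_of_real (1 / sqrt 2)"
  have ne: "({}::'q set) \<noteq> UNIV" by auto
  have "(M *v GHZ) $ S = (\<Sum>T\<in>UNIV. M $ S $ T * (if T = {} \<or> T = UNIV then ?c else 0))"
    by (simp add: matrix_vector_mult_def GHZ_def)
  also have "\<dots> = (\<Sum>T\<in>{{},UNIV}. M $ S $ T * ?c)"
    by (rule sum.mono_neutral_cong_right) auto
  also have "\<dots> = ?c * (M $ S $ {} + M $ S $ UNIV)"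
    using ne by (simp add: algebra_simps)
  finally show ?thesis .
qed

lemma sum_list_entry:
  fixes Hs :: "'q::finite qop list"
  shows "sum_list Hs $ S $ T = sum_list (map (\<lambda>h. h $ S $ T) Hs)"
  by (induction Hs) auto

lemma sum_list_zero_entries:
  "(\<forall>h\<in>set Hs. f h = (0::complex)) \<Longrightarrow> sum_list (map f Hs) = 0"
  by (induction Hs) auto

lemma sum_list_cnj:
  "sum_list (map (\<lambda>h. cnj (f h)) Hs) = cnj (sum_list (map f Hs))"
  by (induction Hs) auto

theorem proposition5:
  fixes Ns :: "'q::finite set set"
  assumes "CARD('q) \<ge> 2"
    and "\<forall>N\<in>Ns. 2 * card N < CARD('q)"
  shows "\<not> QLS Ns (GHZ :: 'q qvec)"
proof
  assume "QLS Ns (GHZ :: 'q qvec)"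
  then obtain Hc Ds r where HcQL: "QL_hamiltonian Ns Hc" and DQL: "\<forall>D\<in>set Ds. QL_op Ns D"
    and Dz: "\<forall>D\<in>set Ds. D *v GHZ = 0"
    and Hr: "Hc *v GHZ = (\<chi> i. complex_of_real r * (GHZ::'q qvec) $ i)"
    and lim: "\<forall>\<rho>0. density_op \<rho>0 \<longrightarrow>
              ((\<lambda>t. semigroup (lindblad Hc Ds) t \<rho>0) \<longlongrightarrow> outer GHZ GHZ) at_top"
    unfolding QLS_def by blast
  obtain Hs where Hs: "\<forall>h\<in>set Hs. hermitian h \<and> QL_op Ns h" and HcD: "Hc = sum_list Hs"
    using HcQL unfolding QL_hamiltonian_def by blast
  let ?c = "complex_of_real (1 / sqrt 2)"
  have c0: "?c \<noteq> 0" by simp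
  have neU: "({}::'q set) \<noteq> UNIV" by auto
  have small0: "2 * card ({}::'q set) < CARD('q)" using assms(1) by simp
  have notsmallU: "\<not> 2 * card (UNIV::'q set) < CARD('q)" by simp
  have Dcol: "D $ S $ {} = 0" if D: "D \<in> set Ds" for D S
  proof -
    obtain N where N: "N \<in> Ns" "QL_on N D" using DQL D unfolding QL_op_def by blast
    have cN: "2 * card N < CARD('q)" using N assms(2) by blast
    have "(D *v GHZ) $ S = 0" using Dz D by simp
    then have e: "D $ S $ {} + D $ S $ UNIV = 0" using ghz_mult[of D S] c0 by simp
    show ?thesis
    proof (cases "2 * card S < CARD('q)")
      case True
      then show ?thesis using e ql_zero_univ[OF N(2) cN True] by simp
    next
      case False
      then show ?thesis using ql_zero_empty[OF N(2) cN False] by simp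
    qed
  qed
  have herm: "Hc $ T $ S = cnj (Hc $ S $ T)" for S T
  proof -
    have "\<forall>h\<in>set Hs. h $ T $ S = cnj (h $ S $ T)"
    proof
      fix h assume "h \<in> set Hs"
      then have "adj h = h" using Hs unfolding hermitian_def by blast
      then have "h $ T $ S = adj h $ T $ S" by simp
      then show "h $ T $ S = cnj (h $ S $ T)" by (simp add: adj_def)
    qed
    then have "sum_list (map (\<lambda>h. h $ T $ S) Hs) = sum_list (map (\<lambda>h. cnj (h $ S $ T)) Hs)"
      by (metis (mono_tags, lifting) map_eq_conv)
    then show ?thesis unfolding HcD sum_list_entry sum_list_cnj .
  qed
  have Hcol: "Hc $ S $ {} = (if S = {} then complex_of_real r else 0)" for S
  proof -
    have e: "?c * (Hc $ S $ {} + Hc $ S $ UNIV) = complex_of_real r * (GHZ::'q qvec) $ S"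
      using ghz_mult[of Hc S] Hr by (metis vec_lambda_beta)
    show ?thesis
    proof (cases "2 * card S < CARD('q)")
      case True
      have "\<forall>h\<in>set Hs. h $ S $ UNIV = 0"
      proof
        fix h assume "h \<in> set Hs"
        then obtain N where N: "N \<in> Ns" "QL_on N h" using Hs unfolding QL_op_def by blast
        have cN: "2 * card N < CARD('q)" using N assms(2) by blast
        show "h $ S $ UNIV = 0" using ql_zero_univ[OF N(2) cN True] .
      qed
      then have z: "Hc $ S $ UNIV = 0" unfolding HcD sum_list_entry
        by (rule sum_list_zero_entries)
      have "S \<noteq> UNIV" using True notsmallU by auto
      show ?thesis
      proof (cases "S = {}")
        case True
        then show ?thesis using e z c0 by (simp add: GHZ_def)
      next
        case False
        then show ?thesis using e z c0 \<open>S \<noteq> UNIV\<close> by (simp add: GHZ_def)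
      qed
    next
      case False
      have "\<forall>h\<in>set Hs. h $ S $ {} = 0"
      proof
        fix h assume "h \<in> set Hs"
        then obtain N where N: "N \<in> Ns" "QL_on N h" using Hs unfolding QL_op_def by blast
        have cN: "2 * card N < CARD('q)" using N assms(2) by blast
        show "h $ S $ {} = 0" using ql_zero_empty[OF N(2) cN False] .
      qed
      then have z: "Hc $ S $ {} = 0" unfolding HcD sum_list_entry
        by (rule sum_list_zero_entries)
      have "S \<noteq> {}" using False small0 by auto
      then show ?thesis using z by simp
    qed
  qed
  have Hrow: "Hc $ {} $ S = (if S = {} then complex_of_real r else 0)" for S
    using herm[of "{}" S] Hcol[of S] by simp
  define \<rho>0 :: "'q qop" where "\<rho>0 = (\<chi> i j. if i = {} \<and> j = {} then 1 else 0)"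
  have prodL: "(M ** \<rho>0) $ i $ j = (if j = {} then M $ i $ {} else 0)" for M :: "'q qop" and i j
    unfolding \<rho>0_def matrix_matrix_mult_def by (simp add: if_distrib cong: if_cong)
  have ifm: "(if P then 1 else 0) * (x::complex) = (if P then x else 0)" for P x by simp
  have prodR: "(\<rho>0 ** M) $ i $ j = (if i = {} then M $ {} $ j else 0)" for M :: "'q qop" and i j
    unfolding \<rho>0_def matrix_matrix_mult_def by (simp add: ifm del: mult_if_delta)
  let ?L = "lindblad Hc Ds"
  have Dterm: "D ** \<rho>0 ** adj D - smul (1/2) (adj D ** D ** \<rho>0 + \<rho>0 ** (adj D ** D)) = 0"
    if D: "D \<in> set Ds" for D
  proof -
    have a: "D ** \<rho>0 = 0" by (simp add: vec_eq_iff prodL Dcol[OF D])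
    have b: "(adj D ** D) $ i $ {} = 0" for i
      by (simp add: matrix_matrix_mult_def Dcol[OF D])
    have c: "(adj D ** D) $ {} $ j = 0" for j
      by (simp add: matrix_matrix_mult_def adj_def Dcol[OF D])
    have d: "adj D ** D ** \<rho>0 + \<rho>0 ** (adj D ** D) = 0"
      by (simp add: vec_eq_iff prodL prodR b c)
    have e: "(0::'q qop) ** adj D = 0" by (simp add: vec_eq_iff matrix_matrix_mult_def)
    show ?thesis by (simp add: a d e smul_def vec_eq_iff)
  qed
  have Hcomm: "Hc ** \<rho>0 - \<rho>0 ** Hc = 0"
    by (simp add: vec_eq_iff prodL prodR Hcol Hrow)
  have L0: "?L \<rho>0 = 0"
  proof -
    have "map (\<lambda>D. D ** \<rho>0 ** adj D - smul (1/2) (adj D ** D ** \<rho>0 + \<rho>0 ** (adj D ** D))) Ds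
          = map (\<lambda>D. 0) Ds" using Dterm by simp
    moreover have "sum_list (map (\<lambda>D. (0::'q qop)) Ds) = 0" by (induction Ds) auto
    moreover have "smul (-\<i>) (0::'q qop) = 0" by (simp add: smul_def vec_eq_iff)
    ultimately show ?thesis unfolding lindblad_def Hcomm by (simp only:) simp
  qed
  have Lz: "?L 0 = 0"
  proof -
    have z1: "(0::'q qop) ** M = 0" "M ** (0::'q qop) = 0" for M :: "'q qop"
      by (simp_all add: vec_eq_iff matrix_matrix_mult_def)
    show ?thesis unfolding lindblad_def by (simp add: z1 smul_def vec_eq_iff sum_list_entry)
  qed
  have pow0: "(?L ^^ k) 0 = 0" for k by (induction k) (simp_all add: Lz)
  have powk: "(?L ^^ k) \<rho>0 = (if k = 0 then \<rho>0 else 0)" for k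
  proof (cases k)
    case 0 then show ?thesis by simp
  next
    case (Suc m) then show ?thesis by (simp add: funpow_Suc_right L0 pow0 del: funpow.simps)
  qed
  have sg: "semigroup ?L t \<rho>0 = \<rho>0" for t
  proof -
    have "(\<lambda>k. (t ^ k / fact k) *\<^sub>R (?L ^^ k) \<rho>0) = (\<lambda>k. if k = 0 then (\<lambda>k. \<rho>0) k else 0)"
      by (auto simp: powk)
    then have "(\<lambda>k. (t ^ k / fact k) *\<^sub>R (?L ^^ k) \<rho>0) sums \<rho>0"
      using sums_single[of 0 "\<lambda>k. \<rho>0"] by simp
    then show ?thesis unfolding semigroup_def by (rule sums_unique[symmetric])
  qed
  have dens: "density_op \<rho>0"
  proof -
    have h: "hermitian \<rho>0" by (simp add: hermitian_def adj_def \<rho>0_def vec_eq_iff)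
    have iv: "inner_c v (\<rho>0 *v v) = cnj (v $ {}) * v $ {}" for v
    proof -
      have "\<rho>0 *v v = (\<chi> i. if i = {} then v $ {} else 0)"
        by (simp add: vec_eq_iff matrix_vector_mult_def \<rho>0_def ifm del: mult_if_delta)
      then show ?thesis by (simp add: inner_c_def if_distrib cong: if_cong)
    qed
    have p: "psd \<rho>0" unfolding psd_def iv
      by (simp add: complex_mult_cnj)
    have t: "trace_c \<rho>0 = 1" by (simp add: trace_c_def \<rho>0_def)
    show ?thesis using h p t by (simp add: density_op_def)
  qed
  have "((\<lambda>t. \<rho>0) \<longlongrightarrow> outer GHZ GHZ) (at_top :: real filter)"
  proof -
    have "((\<lambda>t. semigroup ?L t \<rho>0) \<longlongrightarrow> outer GHZ GHZ) at_top" using lim dens by blast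
    moreover have "(\<lambda>t. semigroup ?L t \<rho>0) = (\<lambda>t. \<rho>0)" using sg by (rule ext)
    ultimately show ?thesis by simp
  qed
  then have "\<rho>0 = outer GHZ GHZ"
    by (rule tendsto_unique[OF trivial_limit_at_top_linorder tendsto_const])
  then have "\<rho>0 $ {} $ {} = outer (GHZ::'q qvec) GHZ $ {} $ {}" by simp
  moreover have "outer (GHZ::'q qvec) GHZ $ {} $ {} = 1/2"
    by (simp add: outer_def GHZ_def flip: of_real_mult)
  ultimately show False by (simp add: \<rho>0_def)
qed

end
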